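(* Let $B,n'\ge1$ be integers, $n=2Bn'$, $s\ge0$, and let $f:\{0,1\}^{n'}\to\{\pm\tfrac12\}$ be a balanced function with $I(f)\le s$. Let $W=\mathrm{Span}\{f_z : z\in\{0,1\}^B\}\subseteq\mathbb{C}^{2^n}$ with $f_z$ as defined below. Then for every $\phi\in W$, $$2^{n-1}I(\phi)\le 2s\,|\phi^*\phi|.$$
   Context: A function $g:\{0,1\}^m\to\mathbb{C}$ is identified with the vector $\sum_x g(x)|x\rangle\in\mathbb{C}^{2^m}$. For $g:\{0,1\}^m\to\mathbb{C}$ and $i\in[m]$, $I_i(g)=\mathbb{E}_{x\in\{0,1\}^m}|g(x)-g(x\oplus e_i)|^2$ and $I(g)=\max_i I_i(g)$. Balanced means $f$ takes each value on exactly half the inputs. Partition $[n]$ into $2B$ consecutive blocks of length $n'$; for $x\in\{0,1\}^n$, $i\in[B]$, $b\in\{0,1\}$, $x_{i,b}\in\{0,1\}^{n'}$ is the restriction of $x$ to the $(2i-1+b)$-th block. For $z\in\{0,1\}^B$, $f_z(x)=f(x_{1,z_1})\cdots f(x_{B,z_B})$. *)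

theory Defs
  imports Complex_Main
begin

text \<open>Bit strings in {0,1}^m are encoded as subsets of {..<m} (the set of positions
holding a 1).
A function g on {0,1}^m is any g :: nat set => complex; only its values on
cube m matter. Indices are 0-based.\<close>

definition cube :: "nat \<Rightarrow> nat set set" where
  "cube m = Pow {..<m}"

definition flip :: "nat set \<Rightarrow> nat \<Rightarrow> nat set" where
  "flip x i = (if i \<in> x then x - {i} else insert i x)"

definition infl_i :: "nat \<Rightarrow> (nat set \<Rightarrow> complex) \<Rightarrow> nat \<Rightarrow> real" where
  "infl_i m g i = (\<Sum>x\<in>cube m. (cmod (g x - g (flip x i)))\<^sup>2) / 2 ^ m"

definition infl :: "nat \<Rightarrow> (nat set \<Rightarrow> complex) \<Rightarrow> real" where
  "infl m g = Max ((infl_i m g) ` {..<m})"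

definition balanced :: "nat \<Rightarrow> (nat set \<Rightarrow> real) \<Rightarrow> bool" where
  "balanced m f \<longleftrightarrow> (\<forall>v \<in> f ` cube m.
      2 * card {x \<in> cube m. f x = v} = card (cube m))"

text \<open>x_{i,b}: restriction of x to block number 2i+b (0-based; i < B), each block
of length n', shifted to {0,1}^{n'}.\<close>
definition restr :: "nat \<Rightarrow> nat set \<Rightarrow> nat \<Rightarrow> bool \<Rightarrow> nat set" where
  "restr n' x i b = {k. k < n' \<and> k + (2 * i + (if b then 1 else 0)) * n' \<in> x}"

definition fz :: "nat \<Rightarrow> nat \<Rightarrow> (nat set \<Rightarrow> real) \<Rightarrow> nat set \<Rightarrow> nat set \<Rightarrow> complex" where
  "fz B n' f z x = complex_of_real (\<Prod>i<B. f (restr n' x i (i \<in> z)))"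

end

theory Submission
  imports Defs "HOL-Library.FuncSet"
begin

definition blk :: "nat \<Rightarrow> nat \<Rightarrow> nat set \<Rightarrow> nat set" where
  "blk N t x = {k. k < N \<and> k + t*N \<in> x}"

lemma blk_cube: "blk N t x \<in> cube N"
  by (auto simp: blk_def cube_def)

lemma finite_cube[simp]: "finite (cube m)"
  by (simp add: cube_def)

lemma card_cube: "card (cube m) = 2 ^ m"
  by (simp add: cube_def card_Pow)

lemma decomp:
  fixes g :: "nat \<Rightarrow> nat set \<Rightarrow> real"
  shows "(\<Sum>x\<in>cube (m*N). \<Prod>t<m. g t (blk N t x)) = (\<Prod>t<m. \<Sum>y\<in>cube N. g t y)"
proof (induction m)
  case 0
  then show ?case by (simp add: cube_def)
next
  case (Suc m)
  define h where "h = (\<lambda>(A::nat set,Y::nat set). A \<union> (\<lambda>k. k + m*N) ` Y)"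
  have blk1: "blk N t (h (A,Y)) = blk N t A" if "A \<in> cube (m*N)" "Y \<in> cube N" "t < m" for A Y t
  proof -
    have "t*N + N \<le> m*N" using that(3)
      by (metis add.commute mult_Suc mult_le_mono1 Suc_leI)
    then show ?thesis using that by (auto simp: blk_def h_def cube_def)
  qed
  have blk2: "blk N m (h (A,Y)) = Y" if "A \<in> cube (m*N)" "Y \<in> cube N" for A Y
    using that by (auto simp: blk_def h_def cube_def)
  have bij: "bij_betw h (cube (m*N) \<times> cube N) (cube (Suc m * N))"
  proof (rule bij_betwI[where g="\<lambda>x. (x \<inter> {..<m*N}, blk N m x)"])
    show "h \<in> cube (m * N) \<times> cube N \<rightarrow> cube (Suc m * N)"
      by (auto simp: h_def cube_def)
    show "(\<lambda>x. (x \<inter> {..<m * N}, blk N m x)) \<in> cube (Suc m * N) \<rightarrow> cube (m * N) \<times> cube N"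
      using blk_cube by (auto simp: cube_def)
    show "(\<lambda>x. (x \<inter> {..<m * N}, blk N m x)) (h p) = p" if "p \<in> cube (m * N) \<times> cube N" for p
      using that blk2 by (auto simp: h_def cube_def)
    show "h (y \<inter> {..<m * N}, blk N m y) = y" if "y \<in> cube (Suc m * N)" for y
    proof
      show "h (y \<inter> {..<m * N}, blk N m y) \<subseteq> y" by (auto simp: h_def blk_def)
      show "y \<subseteq> h (y \<inter> {..<m * N}, blk N m y)"
      proof
        fix e assume e: "e \<in> y"
        show "e \<in> h (y \<inter> {..<m * N}, blk N m y)"
        proof (cases "e < m*N")
          case True then show ?thesis using e by (auto simp: h_def)
        next
          case False
          have "e < N + m*N" using e that by (auto simp: cube_def)
          then have "e - m*N \<in> blk N m y" using False e by (auto simp: blk_def)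
          moreover have "e = (e - m*N) + m*N" using False by simp
          ultimately show ?thesis unfolding h_def by (auto intro!: image_eqI)
        qed
      qed
    qed
  qed
  have "(\<Sum>x\<in>cube (Suc m*N). \<Prod>t<Suc m. g t (blk N t x))
      = (\<Sum>p\<in>cube (m*N) \<times> cube N. \<Prod>t<Suc m. g t (blk N t (h p)))"
    using sum.reindex_bij_betw[OF bij, symmetric] by simp
  also have "\<dots> = (\<Sum>p\<in>cube (m*N) \<times> cube N. (\<Prod>t<m. g t (blk N t (fst p))) * g m (snd p))"
    by (rule sum.cong) (auto simp: blk1 blk2 intro!: prod.cong)
  also have "\<dots> = (\<Sum>A\<in>cube (m*N). \<Sum>Y\<in>cube N. (\<Prod>t<m. g t (blk N t A)) * g m Y)"
    by (simp add: sum.cartesian_product case_prod_beta)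
  also have "\<dots> = (\<Sum>A\<in>cube (m*N). (\<Prod>t<m. g t (blk N t A))) * (\<Sum>Y\<in>cube N. g m Y)"
    by (simp add: sum_product)
  also have "\<dots> = (\<Prod>t<Suc m. \<Sum>y\<in>cube N. g t y)"
    using Suc by simp
  finally show ?case .
qed


lemma two_blk:
  fixes p q :: "nat set \<Rightarrow> real"
  shows "(\<Sum>Y\<in>cube (2*n). p (blk n 0 Y) * q (blk n 1 Y)) = (\<Sum>y\<in>cube n. p y) * (\<Sum>y\<in>cube n. q y)"
  using decomp[where g="\<lambda>t. if t = 0 then p else q" and m=2 and N=n] by (simp add: numeral_2_eq_2)

lemma div_uniq:
  fixes k r t t' N :: nat
  assumes "k < N" "r < N" "k + t*N = t'*N + r"
  shows "t = t' \<and> k = r"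
proof -
  have "k = (k + t*N) mod N" using assms(1) by simp
  also have "\<dots> = (t'*N + r) mod N" using assms(3) by simp
  also have "\<dots> = r" using assms(2) by simp
  finally have kr: "k = r" .
  then have "t*N = t'*N" using assms by simp
  then show ?thesis using assms kr by simp
qed

lemma blk_flip:
  assumes "r < N"
  shows "blk N t (flip x (t'*N + r)) = (if t = t' then flip (blk N t x) r else blk N t x)"
  using assms div_uniq[of _ N r t t'] unfolding blk_def flip_def
  by (auto simp: add.commute split: if_splits)

lemma restr_blk:
  "restr n' x i b = blk n' (if b then 1 else 0) (blk (2*n') i x)"
  unfolding restr_def blk_def by (auto simp: algebra_simps)

lemma quad:
  fixes a :: "'z \<Rightarrow> 'x \<Rightarrow> real" and c :: "'z \<Rightarrow> complex"
  assumes "finite X" "finite Z"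
    and orth: "\<And>z z'. z \<in> Z \<Longrightarrow> z' \<in> Z \<Longrightarrow> (\<Sum>x\<in>X. a z x * a z' x) = (if z = z' then w z else 0)"
  shows "(\<Sum>x\<in>X. (cmod (\<Sum>z\<in>Z. c z * of_real (a z x)))\<^sup>2) = (\<Sum>z\<in>Z. (cmod (c z))\<^sup>2 * w z)"
proof -
  have "complex_of_real (\<Sum>x\<in>X. (cmod (\<Sum>z\<in>Z. c z * of_real (a z x)))\<^sup>2)
      = (\<Sum>x\<in>X. (\<Sum>z\<in>Z. c z * of_real (a z x)) * cnj (\<Sum>z\<in>Z. c z * of_real (a z x)))"
    by (simp only: of_real_sum complex_norm_square)
  also have "\<dots> = (\<Sum>x\<in>X. \<Sum>z\<in>Z. \<Sum>z'\<in>Z. c z * cnj (c z') * of_real (a z x * a z' x))"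
    by (simp add: sum_product mult_ac)
  also have "\<dots> = (\<Sum>z\<in>Z. \<Sum>z'\<in>Z. c z * cnj (c z') * of_real (\<Sum>x\<in>X. a z x * a z' x))"
    by (simp add: sum.swap[of _ X] sum_distrib_left)
  also have "\<dots> = (\<Sum>z\<in>Z. \<Sum>z'\<in>Z. if z = z' then c z * cnj (c z) * of_real (w z) else 0)"
    by (intro sum.cong refl) (simp add: orth)
  also have "\<dots> = (\<Sum>z\<in>Z. c z * cnj (c z) * of_real (w z))"
    using assms(2) by (simp add: sum.delta)
  also have "\<dots> = complex_of_real (\<Sum>z\<in>Z. (cmod (c z))\<^sup>2 * w z)"
    by (simp only: of_real_sum of_real_mult complex_norm_square)
  finally show ?thesis by (simp only: of_real_eq_iff)
qed


lemma f_sum0: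
  fixes f :: "nat set \<Rightarrow> real"
  assumes vals: "\<forall>x \<in> cube n. f x = 1/2 \<or> f x = -1/2" and bal: "balanced n f"
  shows "(\<Sum>y\<in>cube n. f y) = 0"
proof -
  define v where "v = f {}"
  have e: "{} \<in> cube n" by (simp add: cube_def)
  define A where "A = {x \<in> cube n. f x = v}"
  have cA: "2 * card A = card (cube n)" using bal e unfolding balanced_def A_def v_def by auto
  have fin: "finite A" "A \<subseteq> cube n" by (auto simp: A_def)
  have cB: "card (cube n - A) = card A" using cA fin by (simp add: card_Diff_subset)
  have v: "v = 1/2 \<or> v = -1/2" using vals e v_def by auto
  have "(\<Sum>y\<in>cube n. f y) = (\<Sum>y\<in>A. f y) + (\<Sum>y\<in>cube n - A. f y)"
    using fin by (simp add: sum.subset_diff)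
  also have "(\<Sum>y\<in>A. f y) = (\<Sum>y\<in>A. v)" by (rule sum.cong) (auto simp: A_def)
  also have "(\<Sum>y\<in>cube n - A. f y) = (\<Sum>y\<in>cube n - A. - v)"
    by (rule sum.cong) (use vals v in \<open>auto simp: A_def\<close>)
  finally show ?thesis using cB by simp
qed

lemma f_sq:
  fixes f :: "nat set \<Rightarrow> real"
  assumes vals: "\<forall>x \<in> cube n. f x = 1/2 \<or> f x = -1/2"
  shows "(\<Sum>y\<in>cube n. f y * f y) = 2 ^ n / 4"
proof -
  have "(\<Sum>y\<in>cube n. f y * f y) = (\<Sum>y\<in>cube n. 1/4)"
  proof (rule sum.cong)
    fix y assume "y \<in> cube n"
    then have "f y = 1/2 \<or> f y = -1/2" using vals by blast
    then show "f y * f y = 1/4" proof (elim disjE) assume h: "f y = 1/2" show ?thesis unfolding h by simp next assume h: "f y = -1/2" show ?thesis unfolding h by simp qed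
  qed simp
  then show ?thesis by (simp add: card_cube)
qed

lemma prod_if:
  fixes K :: real
  assumes "finite A"
  shows "(\<Prod>i\<in>A. if P i then K else 0) = (if \<forall>i\<in>A. P i then K ^ card A else 0)"
proof (cases "\<forall>i\<in>A. P i")
  case True
  then have "(\<Prod>i\<in>A. if P i then K else 0) = (\<Prod>i\<in>A. K)" by (intro prod.cong) auto
  then show ?thesis using True by simp
next
  case False
  then show ?thesis using assms by (auto intro!: prod_zero)
qed


theorem lemma2:
  fixes B n' :: nat and s :: real and f :: "nat set \<Rightarrow> real"
    and c :: "nat set \<Rightarrow> complex" and \<phi> :: "nat set \<Rightarrow> complex"
  assumes "B \<ge> 1" and "n' \<ge> 1" and "s \<ge> 0"
    and "\<forall>x \<in> cube n'. f x = 1/2 \<or> f x = -1/2"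
    and "balanced n' f"
    and "infl n' (\<lambda>x. complex_of_real (f x)) \<le> s"
    and "\<phi> = (\<lambda>x. \<Sum>z\<in>cube B. c z * fz B n' f z x)"
  shows "2 ^ (2 * B * n' - 1) * infl (2 * B * n') \<phi>
           \<le> 2 * s * (\<Sum>x\<in>cube (2 * B * n'). (cmod (\<phi> x))\<^sup>2)"
proof -
  note vals = assms(4)
  define N where "N = 2 * n'"
  have nN: "2 * B * n' = B * N" by (simp add: N_def)
  define K :: real where "K = 2 ^ n' * 2 ^ n' / 4"
  define G where "G = (\<lambda>(c::nat) Y. f (blk n' c Y))"
  define bz where "bz = (\<lambda>(z::nat set) (i::nat). if i \<in> z then 1 else (0::nat))"
  define F where "F = (\<lambda>z x. \<Prod>i<B. G (bz z i) (blk N i x))"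
  have bz2: "bz z i < 2" for z i by (simp add: bz_def)
  have fzF: "fz B n' f z x = of_real (F z x)" for z x
    unfolding fz_def F_def G_def bz_def N_def by (simp add: restr_blk)
  have phiF: "\<phi> x = (\<Sum>z\<in>cube B. c z * of_real (F z x))" for x
    using assms(7) fzF by simp
  have s0: "(\<Sum>y\<in>cube n'. f y) = 0" using f_sum0[OF vals assms(5)] .
  have s2: "(\<Sum>y\<in>cube n'. f y * f y) = 2 ^ n' / 4" using f_sq[OF vals] .
  have s1: "(\<Sum>y\<in>cube n'. (1::real)) = 2 ^ n'" by (simp add: card_cube)
  have GG: "(\<Sum>Y\<in>cube N. G a Y * G a' Y) = (if a = a' then K else 0)"
    if "a < 2" "a' < 2" for a a'
  proof -
    have a: "a = 0 \<or> a = 1" "a' = 0 \<or> a' = 1" using that by auto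
    show ?thesis
    proof (cases "a = 0")
      case True note a0 = this
      show ?thesis
      proof (cases "a' = 0")
        case True
        have "(\<Sum>Y\<in>cube N. G a Y * G a' Y) = (\<Sum>Y\<in>cube (2*n'). (\<lambda>y. f y * f y) (blk n' 0 Y) * (\<lambda>y. 1) (blk n' 1 Y))"
          unfolding N_def G_def using a0 True by simp
        also have "\<dots> = K" by (subst two_blk) (simp add: s2 s1 K_def card_cube)
        finally show ?thesis using a0 True by simp
      next
        case False
        then have a1: "a' = 1" using a by simp
        have "(\<Sum>Y\<in>cube N. G a Y * G a' Y) = (\<Sum>Y\<in>cube (2*n'). f (blk n' 0 Y) * f (blk n' 1 Y))"
          unfolding N_def G_def using a0 a1 by simp
        also have "\<dots> = 0" by (subst two_blk) (simp add: s0)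
        finally show ?thesis using a0 a1 by simp
      qed
    next
      case False
      then have a0: "a = 1" using a by simp
      show ?thesis
      proof (cases "a' = 0")
        case True
        have "(\<Sum>Y\<in>cube N. G a Y * G a' Y) = (\<Sum>Y\<in>cube (2*n'). f (blk n' 0 Y) * f (blk n' 1 Y))"
          unfolding N_def G_def using a0 True by (simp add: mult.commute)
        also have "\<dots> = 0" by (subst two_blk) (simp add: s0)
        finally show ?thesis using a0 True by simp
      next
        case False
        then have a1: "a' = 1" using a by simp
        have "(\<Sum>Y\<in>cube N. G a Y * G a' Y) = (\<Sum>Y\<in>cube (2*n'). (\<lambda>y. 1) (blk n' 0 Y) * (\<lambda>y. f y * f y) (blk n' 1 Y))"
          unfolding N_def G_def using a0 a1 by simp
        also have "\<dots> = K" by (subst two_blk) (simp add: s2 s1 K_def card_cube)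
        finally show ?thesis using a0 a1 by simp
      qed
    qed
  qed
  have bz_eq: "(\<forall>i\<in>{..<B}. bz z i = bz z' i) \<longleftrightarrow> z = z'" if "z \<in> cube B" "z' \<in> cube B" for z z'
    using that unfolding bz_def cube_def by (auto split: if_splits)
  have orth1: "(\<Sum>x\<in>cube (B*N). F z x * F z' x) = (if z = z' then K ^ B else 0)"
    if "z \<in> cube B" "z' \<in> cube B" for z z'
  proof -
    have "(\<Sum>x\<in>cube (B*N). F z x * F z' x)
        = (\<Sum>x\<in>cube (B*N). \<Prod>i<B. (\<lambda>i Y. G (bz z i) Y * G (bz z' i) Y) i (blk N i x))"
      unfolding F_def by (simp add: prod.distrib)
    also have "\<dots> = (\<Prod>i<B. \<Sum>Y\<in>cube N. G (bz z i) Y * G (bz z' i) Y)"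
      by (rule decomp)
    also have "\<dots> = (\<Prod>i<B. if bz z i = bz z' i then K else 0)"
      using GG bz2 by simp
    also have "\<dots> = (if z = z' then K ^ B else 0)"
      using prod_if[of "{..<B}"] bz_eq[OF that] by simp
    finally show ?thesis .
  qed
  have norm_phi: "(\<Sum>x\<in>cube (B*N). (cmod (\<phi> x))\<^sup>2) = (\<Sum>z\<in>cube B. (cmod (c z))\<^sup>2 * K ^ B)"
    unfolding phiF by (rule quad) (auto simp: orth1)
  define S where "S = (\<Sum>z\<in>cube B. (cmod (c z))\<^sup>2 * K ^ B)"
  have Npos: "N > 0" using assms(2) by (simp add: N_def)
  have BNpos: "B * N \<ge> 1" using assms(1) Npos by simp
  have jbound: "2 ^ (B*N - 1) * infl_i (B*N) \<phi> j \<le> 2 * s * S" if j: "j < B*N" for j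
  proof -
    define i where "i = j div N"
    define r where "r = j mod N"
    define b where "b = r div n'"
    define k where "k = r mod n'"
    have ji: "j = i * N + r" by (simp add: i_def r_def)
    have rN: "r < N" using Npos by (simp add: r_def)
    have iB: "i < B" using j by (simp add: i_def less_mult_imp_div_less)
    have rb: "r = b * n' + k" by (simp add: b_def k_def)
    have b2: "b < 2" using rN by (simp add: b_def N_def less_mult_imp_div_less)
    have kn: "k < n'" using assms(2) by (simp add: k_def)
    define T where "T = (\<Sum>y\<in>cube n'. (f y - f (flip y k))\<^sup>2)"
    have Tb: "T \<le> 2 ^ n' * s"
    proof -
      have e1: "infl_i n' (\<lambda>x. complex_of_real (f x)) k = T / 2 ^ n'"
        unfolding infl_i_def T_def
        by (simp flip: of_real_diff del: of_real_diff)
      have e2: "infl_i n' (\<lambda>x. complex_of_real (f x)) k \<le> infl n' (\<lambda>x. complex_of_real (f x))"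
        unfolding infl_def using kn by (intro Max_ge) auto
      have "T / 2 ^ n' \<le> s" using e1 e2 assms(6) by simp
      then show ?thesis by (simp add: field_simps)
    qed
    have T0: "T \<ge> 0" unfolding T_def by (intro sum_nonneg) auto
    define R where "R = {..<B} - {i}"
    have cR: "card R = B - 1" using iB by (simp add: R_def)
    define D where "D = (\<lambda>z i' Y. if i' = i then G (bz z i) Y - G (bz z i) (flip Y r) else G (bz z i') Y)"
    have diffF: "F z x - F z (flip x j) = (\<Prod>i'<B. D z i' (blk N i' x))" for z x
    proof -
      have fl: "blk N i' (flip x j) = (if i' = i then flip (blk N i x) r else blk N i' x)" for i'
        unfolding ji using blk_flip[OF rN] by simp
      have P1: "F z x = G (bz z i) (blk N i x) * (\<Prod>i'\<in>R. G (bz z i') (blk N i' x))"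
        unfolding F_def R_def using iB by (simp add: prod.remove)
      have P2: "F z (flip x j) = G (bz z i) (flip (blk N i x) r) * (\<Prod>i'\<in>R. G (bz z i') (blk N i' x))"
        unfolding F_def R_def using iB by (simp add: prod.remove fl)
      have P3: "(\<Prod>i'<B. D z i' (blk N i' x)) = D z i (blk N i x) * (\<Prod>i'\<in>R. D z i' (blk N i' x))"
        unfolding R_def using iB by (simp add: prod.remove)
      have P4: "(\<Prod>i'\<in>R. D z i' (blk N i' x)) = (\<Prod>i'\<in>R. G (bz z i') (blk N i' x))"
        unfolding R_def D_def by (intro prod.cong) auto
      show ?thesis unfolding P1 P2 P3 P4 by (simp add: D_def algebra_simps)
    qed
    have Gfl: "G a (flip Y r) = (if a = b then f (flip (blk n' b Y) k) else G a Y)" for a Y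
      unfolding G_def rb using blk_flip[OF kn] by simp
    have DD: "(\<Sum>Y\<in>cube N. (G a Y - G a (flip Y r)) * (G a' Y - G a' (flip Y r)))
        = (if a = b \<and> a' = b then 2 ^ n' * T else 0)" if "a < 2" "a' < 2" for a a'
    proof (cases "a = b \<and> a' = b")
      case True
      then have ab: "a = b" "a' = b" by auto
      define d where "d = (\<lambda>y. (f y - f (flip y k))\<^sup>2)"
      have "(\<Sum>Y\<in>cube N. (G a Y - G a (flip Y r)) * (G a' Y - G a' (flip Y r)))
          = (\<Sum>Y\<in>cube N. d (blk n' b Y))"
        unfolding Gfl ab by (simp add: d_def G_def power2_eq_square)
      also have "\<dots> = 2 ^ n' * T"
      proof (cases "b = 0")
        case True
        have "(\<Sum>Y\<in>cube N. d (blk n' b Y)) = (\<Sum>Y\<in>cube (2*n'). d (blk n' 0 Y) * (\<lambda>y. 1) (blk n' 1 Y))"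
          using True by (simp add: N_def)
        also have "\<dots> = 2 ^ n' * T" by (subst two_blk) (simp add: T_def d_def card_cube)
        finally show ?thesis .
      next
        case False
        then have "b = 1" using b2 by simp
        then have "(\<Sum>Y\<in>cube N. d (blk n' b Y)) = (\<Sum>Y\<in>cube (2*n'). (\<lambda>y. 1) (blk n' 0 Y) * d (blk n' 1 Y))"
          by (simp add: N_def)
        also have "\<dots> = 2 ^ n' * T" by (subst two_blk) (simp add: T_def d_def card_cube)
        finally show ?thesis .
      qed
      finally show ?thesis using True by simp
    next
      case False
      then show ?thesis unfolding Gfl by auto
    qed
    have orth2: "(\<Sum>x\<in>cube (B*N). (F z x - F z (flip x j)) * (F z' x - F z' (flip x j)))
        = (if z = z' then (if bz z i = b then K ^ (B-1) * (2 ^ n' * T) else 0) else 0)"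
      if zz: "z \<in> cube B" "z' \<in> cube B" for z z'
    proof -
      define E where "E = (\<lambda>i'. \<Sum>Y\<in>cube N. D z i' Y * D z' i' Y)"
      have "(\<Sum>x\<in>cube (B*N). (F z x - F z (flip x j)) * (F z' x - F z' (flip x j)))
          = (\<Sum>x\<in>cube (B*N). \<Prod>i'<B. (\<lambda>i' Y. D z i' Y * D z' i' Y) i' (blk N i' x))"
        unfolding diffF by (simp add: prod.distrib)
      also have "\<dots> = (\<Prod>i'<B. E i')" unfolding E_def by (rule decomp)
      also have "\<dots> = E i * (\<Prod>i'\<in>R. E i')"
        unfolding R_def using iB by (simp add: prod.remove)
      also have "(\<Prod>i'\<in>R. E i') = (\<Prod>i'\<in>R. if bz z i' = bz z' i' then K else 0)"
        by (intro prod.cong) (auto simp: R_def E_def D_def GG bz2)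
      also have "\<dots> = (if \<forall>i'\<in>R. bz z i' = bz z' i' then K ^ (B-1) else 0)"
        by (simp add: prod_if R_def cR[unfolded R_def])
      also have "E i = (if bz z i = b \<and> bz z' i = b then 2 ^ n' * T else 0)"
        unfolding E_def D_def using DD bz2 by simp
      finally have eq: "(\<Sum>x\<in>cube (B*N). (F z x - F z (flip x j)) * (F z' x - F z' (flip x j)))
          = (if bz z i = b \<and> bz z' i = b then 2 ^ n' * T else 0) * (if \<forall>i'\<in>R. bz z i' = bz z' i' then K ^ (B-1) else 0)" .
      show ?thesis
      proof (cases "z = z'")
        case True then show ?thesis using eq by simp
      next
        case False
        then obtain i0 where i0: "i0 < B" "bz z i0 \<noteq> bz z' i0" using bz_eq[OF zz] by auto
        show ?thesis
        proof (cases "i0 = i")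
          case True then show ?thesis using eq i0 False by auto
        next
          case False
          then have "i0 \<in> R" using i0 by (simp add: R_def)
          then show ?thesis using eq i0 \<open>z \<noteq> z'\<close> by auto
        qed
      qed
    qed
    define w where "w = (\<lambda>z. if bz z i = b then K ^ (B-1) * (2 ^ n' * T) else 0)"
    have K0: "K \<ge> 0" by (simp add: K_def)
    have sumD: "(\<Sum>x\<in>cube (B*N). (cmod (\<phi> x - \<phi> (flip x j)))\<^sup>2) = (\<Sum>z\<in>cube B. (cmod (c z))\<^sup>2 * w z)"
    proof -
      have "\<phi> x - \<phi> (flip x j) = (\<Sum>z\<in>cube B. c z * of_real (F z x - F z (flip x j)))" for x
        unfolding phiF by (simp add: sum_subtractf algebra_simps)
      then have "(\<Sum>x\<in>cube (B*N). (cmod (\<phi> x - \<phi> (flip x j)))\<^sup>2)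
          = (\<Sum>x\<in>cube (B*N). (cmod (\<Sum>z\<in>cube B. c z * of_real (F z x - F z (flip x j))))\<^sup>2)"
        by simp
      also have "\<dots> = (\<Sum>z\<in>cube B. (cmod (c z))\<^sup>2 * w z)"
        by (rule quad) (auto simp: orth2 w_def)
      finally show ?thesis .
    qed
    have "(\<Sum>z\<in>cube B. (cmod (c z))\<^sup>2 * w z) \<le> (\<Sum>z\<in>cube B. (cmod (c z))\<^sup>2 * (K ^ (B-1) * (2 ^ n' * (2 ^ n' * s))))"
      by (intro sum_mono mult_left_mono) (auto simp: w_def K0 Tb T0 assms(3) mult_left_mono)
    also have "\<dots> = 4 * s * S"
    proof -
      have h: "K ^ (B-1) * (2 ^ n' * (2 ^ n' * s)) = 4 * s * K ^ B"
        using assms(1) by (cases B) (auto simp: K_def field_simps)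
      show ?thesis unfolding h S_def by (simp add: sum_distrib_left mult_ac)
    qed
    finally have X: "(\<Sum>x\<in>cube (B*N). (cmod (\<phi> x - \<phi> (flip x j)))\<^sup>2) \<le> 4 * s * S"
      using sumD by simp
    have p2: "(2::real) ^ (B*N) = 2 * 2 ^ (B*N - 1)"
      using BNpos by (metis Suc_diff_1 less_le_trans zero_less_one power_Suc)
    show ?thesis unfolding infl_i_def p2 using X by (simp add: field_simps)
  qed
  have ne: "{..<B*N} \<noteq> {}" using BNpos lessThan_empty_iff by (metis not_one_le_zero)
  obtain j where j: "j < B*N" "infl (B*N) \<phi> = infl_i (B*N) \<phi> j"
  proof -
    have "Max (infl_i (B*N) \<phi> ` {..<B*N}) \<in> infl_i (B*N) \<phi> ` {..<B*N}"
      using ne by (intro Max_in) auto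
    then show ?thesis using that unfolding infl_def by blast
  qed
  show ?thesis unfolding nN j(2) norm_phi[folded S_def] using jbound[OF j(1)] .
qed

end
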